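(* Let $R$ be a finite group, let $T$ be a subgroup of $R$, let $p$ be a prime number, and let $\mathrm{Syl}_p(R,T)$ denote the set of Sylow $p$-subgroups $P$ of $R$ such that $T\cap P$ is a Sylow $p$-subgroup of $T$. Then the number of orbits of $T$ acting by conjugation on $\mathrm{Syl}_p(R,T)$ is at most $[R:T]/p^c$, where $p^c$ is the largest power of $p$ dividing $[R:T]$. *)

theory Defs
  imports "HOL-Algebra.Algebra" "HOL-Computational_Algebra.Primes"
begin

definition sylow_subgroup :: "('a, 'b) monoid_scheme \<Rightarrow> nat \<Rightarrow> 'a set \<Rightarrow> bool" where
  "sylow_subgroup G p P \<longleftrightarrow>
     subgroup P G \<and> card P = p ^ multiplicity p (order G)"

definition Syl_rel :: "('a, 'b) monoid_scheme \<Rightarrow> 'a set \<Rightarrow> nat \<Rightarrow> 'a set set" where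
  "Syl_rel R T p = {P. sylow_subgroup R p P \<and>
       sylow_subgroup (R\<lparr>carrier := T\<rparr>) p (T \<inter> P)}"

definition conj_set :: "('a, 'b) monoid_scheme \<Rightarrow> 'a \<Rightarrow> 'a set \<Rightarrow> 'a set" where
  "conj_set G g P = (\<lambda>x. g \<otimes>\<^bsub>G\<^esub> x \<otimes>\<^bsub>G\<^esub> inv\<^bsub>G\<^esub> g) ` P"

definition conj_orbits :: "('a, 'b) monoid_scheme \<Rightarrow> 'a set \<Rightarrow> 'a set set \<Rightarrow> 'a set set set" where
  "conj_orbits G T S = (\<lambda>P. {conj_set G t P | t. t \<in> T}) ` S"

end

theory Submission
  imports Defs
begin

lemma (in group) rcos_closed:
  assumes K: "subgroup K G" and C: "C \<in> rcosets K" and x: "x \<in> carrier G"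
  shows "C #> x \<in> rcosets K"
proof -
  obtain a where a: "a \<in> carrier G" "C = K #> a" using C unfolding RCOSETS_def by auto
  have "C #> x = K #> (a \<otimes> x)" using a x coset_mult_assoc subgroup.subset[OF K] by simp
  thus ?thesis using a x rcosetsI subgroup.subset[OF K] by simp
qed

lemma (in group) rcos_action:
  assumes H: "subgroup H G" and K: "subgroup K G"
  shows "group_action (G\<lparr>carrier := H\<rparr>) (rcosets K) (\<lambda>h. \<lambda>C\<in>rcosets K. C #> inv h)"
proof -
  have sub: "\<And>C. C \<in> rcosets K \<Longrightarrow> C \<subseteq> carrier G"
    using subgroup.rcosets_carrier[OF K is_group] by blast
  have Hc: "\<And>h. h \<in> H \<Longrightarrow> h \<in> carrier G" using subgroup.subset[OF H] by blast
  have bij: "(\<lambda>C\<in>rcosets K. C #> inv h) \<in> Bij (rcosets K)" if h: "h \<in> H" for h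
  proof -
    have hc: "h \<in> carrier G" using Hc h .
    have bkA: "\<And>C. C \<in> rcosets K \<Longrightarrow> (C #> inv h) #> h = C"
      using hc sub by (simp add: coset_mult_assoc)
    have bkB: "\<And>C. C \<in> rcosets K \<Longrightarrow> (C #> h) #> inv h = C"
      using hc sub by (simp add: coset_mult_assoc)
    have "inj_on (\<lambda>C. C #> inv h) (rcosets K)"
      by (metis (no_types, lifting) bkA inj_onI)
    moreover have "(\<lambda>C. C #> inv h) ` (rcosets K) = rcosets K"
    proof
      show "(\<lambda>C. C #> inv h) ` (rcosets K) \<subseteq> rcosets K" using rcos_closed[OF K] hc by auto
      show "rcosets K \<subseteq> (\<lambda>C. C #> inv h) ` (rcosets K)"
      proof
        fix C assume "C \<in> rcosets K"
        then show "C \<in> (\<lambda>C. C #> inv h) ` (rcosets K)"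
          using bkB rcos_closed[OF K _ hc] by (metis image_eqI)
      qed
    qed
    ultimately have "bij_betw (\<lambda>C. C #> inv h) (rcosets K) (rcosets K)"
      unfolding bij_betw_def by simp
    then have "bij_betw (\<lambda>C\<in>rcosets K. C #> inv h) (rcosets K) (rcosets K)"
      using bij_betw_cong[of "rcosets K" "\<lambda>C\<in>rcosets K. C #> inv h" "\<lambda>C. C #> inv h" "rcosets K"] by simp
    then show ?thesis unfolding Bij_def by simp
  qed
  have hom: "(\<lambda>h. \<lambda>C\<in>rcosets K. C #> inv h) \<in> hom (G\<lparr>carrier := H\<rparr>) (BijGroup (rcosets K))"
  proof (rule homI)
    fix h assume "h \<in> carrier (G\<lparr>carrier := H\<rparr>)"
    then show "(\<lambda>C\<in>rcosets K. C #> inv h) \<in> carrier (BijGroup (rcosets K))"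
      using bij by (auto simp: BijGroup_def)
  next
      fix x y assume x: "x \<in> carrier (G\<lparr>carrier := H\<rparr>)" and y: "y \<in> carrier (G\<lparr>carrier := H\<rparr>)"
      then have xH: "x \<in> H" and yH: "y \<in> H" by auto
      then have xc: "x \<in> carrier G" and yc: "y \<in> carrier G" using Hc by auto
      have "(\<lambda>C\<in>rcosets K. C #> inv x) \<otimes>\<^bsub>BijGroup (rcosets K)\<^esub> (\<lambda>C\<in>rcosets K. C #> inv y)
            = compose (rcosets K) (\<lambda>C\<in>rcosets K. C #> inv x) (\<lambda>C\<in>rcosets K. C #> inv y)"
        using bij xH yH by (simp add: BijGroup_def)
      also have "\<dots> = (\<lambda>C\<in>rcosets K. C #> inv (x \<otimes> y))"
        unfolding compose_def
      proof (rule restrict_ext)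
        fix C assume C: "C \<in> rcosets K"
        have "C #> inv (x \<otimes> y) = (C #> inv y) #> inv x"
          using xc yc sub[OF C] by (simp add: coset_mult_assoc inv_mult_group)
        then show "(\<lambda>C\<in>rcosets K. C #> inv x) ((\<lambda>C\<in>rcosets K. C #> inv y) C) = C #> inv (x \<otimes> y)"
          using C rcos_closed[OF K C] yc by simp
      qed
      finally show "(\<lambda>C\<in>rcosets K. C #> inv (x \<otimes>\<^bsub>G\<lparr>carrier := H\<rparr>\<^esub> y)) =
       (\<lambda>C\<in>rcosets K. C #> inv x) \<otimes>\<^bsub>BijGroup (rcosets K)\<^esub> (\<lambda>C\<in>rcosets K. C #> inv y)"
        by simp
  qed
  show ?thesis
    unfolding group_action_def group_hom_def group_hom_axioms_def
    using hom subgroup.subgroup_is_group[OF H is_group] group_BijGroup by blast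
qed

context group begin

lemma conj_set_subset: "g \<in> carrier G \<Longrightarrow> S \<subseteq> carrier G \<Longrightarrow> conj_set G g S \<subseteq> carrier G"
  unfolding conj_set_def by auto

lemma conj_set_comp:
  assumes "g \<in> carrier G" "h \<in> carrier G" "S \<subseteq> carrier G"
  shows "conj_set G g (conj_set G h S) = conj_set G (g \<otimes> h) S"
  unfolding conj_set_def image_image
proof (rule image_cong[OF refl])
  fix x assume "x \<in> S"
  then have x: "x \<in> carrier G" using assms by auto
  show "g \<otimes> (h \<otimes> x \<otimes> inv h) \<otimes> inv g = g \<otimes> h \<otimes> x \<otimes> inv (g \<otimes> h)"
    using assms x by (simp add: m_assoc inv_mult_group)
qed

lemma conj_set_one: "S \<subseteq> carrier G \<Longrightarrow> conj_set G \<one> S = S"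
  unfolding conj_set_def by (auto simp: subsetD)

lemma card_conj_set:
  assumes "g \<in> carrier G" "S \<subseteq> carrier G"
  shows "card (conj_set G g S) = card S"
  unfolding conj_set_def
proof (rule card_image, rule inj_onI)
  fix x y assume "x \<in> S" "y \<in> S" and e: "g \<otimes> x \<otimes> inv g = g \<otimes> y \<otimes> inv g"
  then have "x \<in> carrier G" "y \<in> carrier G" using assms by auto
  then show "x = y" using e assms by (simp add: m_assoc)
qed

lemma conj_set_Int:
  assumes "g \<in> carrier G" "A \<subseteq> carrier G" "B \<subseteq> carrier G"
  shows "conj_set G g (A \<inter> B) = conj_set G g A \<inter> conj_set G g B"
  unfolding conj_set_def
proof (rule inj_on_image_Int[OF _ assms(2,3)])
  show "inj_on (\<lambda>x. g \<otimes> x \<otimes> inv g) (carrier G)"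
  proof (rule inj_onI)
    fix x y assume "x \<in> carrier G" "y \<in> carrier G" and e: "g \<otimes> x \<otimes> inv g = g \<otimes> y \<otimes> inv g"
    then have "x \<in> carrier G" "y \<in> carrier G" using assms by auto
    then show "x = y" using e assms by (simp add: m_assoc)
  qed
qed

lemma conj_set_self:
  assumes H: "subgroup H G" and g: "g \<in> H"
  shows "conj_set G g H = H"
proof -
  have gc: "g \<in> carrier G" using H g subgroup.subset by blast
  have "conj_set G g H \<subseteq> H"
    unfolding conj_set_def using H g by (auto intro!: subgroup.m_closed subgroup.m_inv_closed)
  moreover have "finite H \<or> True" by simp
  moreover have "H \<subseteq> conj_set G g H"
  proof
    fix x assume x: "x \<in> H"
    then have xc: "x \<in> carrier G" using H subgroup.subset by blast
    have "inv g \<otimes> x \<otimes> g \<in> H" using H g x by (auto intro!: subgroup.m_closed subgroup.m_inv_closed)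
    moreover have "x = g \<otimes> (inv g \<otimes> x \<otimes> g) \<otimes> inv g" using gc xc by (simp add: m_assoc[symmetric]) (simp add: m_assoc)
    ultimately show "x \<in> conj_set G g H" unfolding conj_set_def by blast
  qed
  ultimately show ?thesis by blast
qed

lemma rcos_eq_iff:
  assumes K: "subgroup K G" and x: "x \<in> carrier G" and y: "y \<in> carrier G"
  shows "K #> x = K #> y \<longleftrightarrow> x \<otimes> inv y \<in> K"
proof
  assume "K #> x = K #> y"
  then have "x \<in> K #> y" using rcos_self[OF x K] by simp
  then show "x \<otimes> inv y \<in> K" using subgroup.rcos_module[OF K is_group y x] by simp
next
  assume "x \<otimes> inv y \<in> K"
  then have "x \<in> K #> y" using subgroup.rcos_module[OF K is_group y x] by simp
  then show "K #> x = K #> y" using repr_independence[OF _ y K] by simp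
qed

lemma rcos_orbit:
  assumes H: "subgroup H G" and K: "subgroup K G" and g: "g \<in> carrier G"
  shows "orbit (G\<lparr>carrier := H\<rparr>) (\<lambda>h. \<lambda>C\<in>rcosets K. C #> inv h) (K #> g)
         = (\<lambda>h. K #> (g \<otimes> inv h)) ` H"
proof -
  have Kg: "K #> g \<in> rcosets K" using rcosetsI[OF subgroup.subset[OF K] g] .
  have "\<And>h. h \<in> H \<Longrightarrow> K #> g #> inv h = K #> (g \<otimes> inv h)"
    using coset_mult_assoc subgroup.subset[OF K] subgroup.subset[OF H] g by blast
  then show ?thesis unfolding orbit_def using Kg by auto
qed

lemma rcos_stab:
  assumes H: "subgroup H G" and K: "subgroup K G" and g: "g \<in> carrier G"
  shows "stabilizer (G\<lparr>carrier := H\<rparr>) (\<lambda>h. \<lambda>C\<in>rcosets K. C #> inv h) (K #> g)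
         = {h \<in> H. g \<otimes> h \<otimes> inv g \<in> K}"
proof -
  have Kg: "K #> g \<in> rcosets K" using rcosetsI[OF subgroup.subset[OF K] g] .
  have "(K #> g #> inv h = K #> g) \<longleftrightarrow> g \<otimes> h \<otimes> inv g \<in> K" if h: "h \<in> H" for h
  proof -
    have hc: "h \<in> carrier G" using h H subgroup.subset by blast
    have "K #> g #> inv h = K #> (g \<otimes> inv h)"
      using coset_mult_assoc subgroup.subset[OF K] hc g by blast
    then have "(K #> g #> inv h = K #> g) \<longleftrightarrow> g \<otimes> inv h \<otimes> inv g \<in> K"
      using rcos_eq_iff[OF K _ g, of "g \<otimes> inv h"] hc g by simp
    also have "g \<otimes> inv h \<otimes> inv g = inv (g \<otimes> h \<otimes> inv g)"
      using hc g by (simp add: inv_mult_group m_assoc)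
    also have "inv (g \<otimes> h \<otimes> inv g) \<in> K \<longleftrightarrow> g \<otimes> h \<otimes> inv g \<in> K"
    proof -
      have xc: "g \<otimes> h \<otimes> inv g \<in> carrier G" using hc g by simp
      show ?thesis using subgroup.m_inv_closed[OF K] inv_inv[OF xc] by metis
    qed
    finally show ?thesis .
  qed
  then show ?thesis unfolding stabilizer_def using Kg by auto
qed

lemma card_rcos_stab:
  assumes H: "subgroup H G" and K: "subgroup K G" and g: "g \<in> carrier G"
  shows "card (stabilizer (G\<lparr>carrier := H\<rparr>) (\<lambda>h. \<lambda>C\<in>rcosets K. C #> inv h) (K #> g))
         = card (conj_set G g H \<inter> K)"
proof -
  have "conj_set G g {h \<in> H. g \<otimes> h \<otimes> inv g \<in> K} = conj_set G g H \<inter> K"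
    unfolding conj_set_def by auto
  moreover have "card (conj_set G g {h \<in> H. g \<otimes> h \<otimes> inv g \<in> K}) = card {h \<in> H. g \<otimes> h \<otimes> inv g \<in> K}"
    by (rule card_conj_set[OF g]) (use subgroup.subset[OF H] in auto)
  ultimately show ?thesis using rcos_stab[OF H K g] by simp
qed


end

context group begin
lemma sylow_conj:
  assumes fin: "finite (carrier G)" and p: "Factorial_Ring.prime (p::nat)"
    and P: "sylow_subgroup G p P" and Q: "sylow_subgroup G p Q"
  shows "\<exists>g\<in>carrier G. Q = conj_set G g P"
proof -
  define a where "a = multiplicity p (order G)"
  have PS: "subgroup P G" and cP: "card P = p ^ a" using P unfolding sylow_subgroup_def a_def by auto
  have QS: "subgroup Q G" and cQ: "card Q = p ^ a" using Q unfolding sylow_subgroup_def a_def by auto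
  define \<phi> where "\<phi> = (\<lambda>h. \<lambda>C\<in>rcosets P. C #> inv h)"
  interpret A: group_action "G\<lparr>carrier := Q\<rparr>" "rcosets P" \<phi>
    using rcos_action[OF QS PS] unfolding \<phi>_def .
  have finE: "finite (rcosets P)"
    using rcosets_subset_PowG[OF PS] fin by (meson finite_Pow_iff finite_subset)
  have ord0: "order G \<noteq> 0" using fin order_gt_0_iff_finite by simp
  have fixp: "\<exists>x\<in>carrier G. \<forall>q\<in>Q. P #> x #> inv q = P #> x"
  proof (rule ccontr)
    assume nf: "\<not> (\<exists>x\<in>carrier G. \<forall>q\<in>Q. P #> x #> inv q = P #> x)"
    have dv: "p dvd card Ob" if Ob: "Ob \<in> orbits (G\<lparr>carrier := Q\<rparr>) (rcosets P) \<phi>" for Ob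
    proof -
      obtain C where C: "C \<in> rcosets P" and ObC: "Ob = orbit (G\<lparr>carrier := Q\<rparr>) \<phi> C"
        using Ob unfolding orbits_def by auto
      obtain x where x: "x \<in> carrier G" and Cx: "C = P #> x" using C unfolding RCOSETS_def by auto
      have "card Ob * card (stabilizer (G\<lparr>carrier := Q\<rparr>) \<phi> C) = p ^ a"
        using A.orbit_stabilizer_theorem[OF C] ObC cQ by (simp add: order_def)
      then have "card Ob dvd p ^ a" by (rule dvdI[OF sym])
      then obtain i where i: "i \<le> a" "card Ob = p ^ i" using divides_primepow_nat[OF p] by auto
      show ?thesis
      proof (cases i)
        case 0
        then have c1: "card Ob = 1" using i by simp
        have "C \<in> Ob" using A.orbit_refl[OF C] ObC by simp
        then have Ob1: "Ob = {C}" using c1 by (auto simp: card_1_singleton_iff)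
        have "\<forall>q\<in>Q. P #> x #> inv q = P #> x"
        proof
          fix q assume q: "q \<in> Q"
          have "\<phi> q C \<in> Ob" unfolding ObC orbit_def using q by auto
          then have "\<phi> q C = C" using Ob1 by simp
          then show "P #> x #> inv q = P #> x" using C Cx unfolding \<phi>_def by simp
        qed
        then show ?thesis using nf x by blast
      next
        case (Suc j)
        then show ?thesis using i by simp
      qed
    qed
    have "(\<Sum>Ob\<in>orbits (G\<lparr>carrier := Q\<rparr>) (rcosets P) \<phi>. \<Sum>x\<in>Ob. (1::nat)) = (\<Sum>x\<in>rcosets P. 1)"
      by (rule A.disjoint_sum[OF finE])
    then have "card (rcosets P) = (\<Sum>Ob\<in>orbits (G\<lparr>carrier := Q\<rparr>) (rcosets P) \<phi>. card Ob)" by simp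
    then have "p dvd card (rcosets P)" using dv by (simp add: dvd_sum)
    then have "p * card P dvd card (rcosets P) * card P" by (rule mult_dvd_mono) simp
    then have "p * p ^ a dvd order G" using lagrange[OF PS] cP by (simp only:)
    then have "p ^ Suc a dvd order G" by simp
    moreover have "\<not> is_unit p" using p not_prime_unit by blast
    ultimately have "Suc a \<le> a" unfolding a_def
      using multiplicity_geI[OF ord0] by blast
    then show False by simp
  qed
  then obtain x where x: "x \<in> carrier G" and fx: "\<forall>q\<in>Q. P #> x #> inv q = P #> x" by blast
  have Qc: "Q \<subseteq> carrier G" "P \<subseteq> carrier G" using QS PS subgroup.subset by auto
  have sub: "conj_set G x Q \<subseteq> P"
  proof
    fix z assume "z \<in> conj_set G x Q"
    then obtain y where y: "y \<in> Q" and z: "z = x \<otimes> y \<otimes> inv x" unfolding conj_set_def by auto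
    have yc: "y \<in> carrier G" using y Qc by auto
    have "inv y \<in> Q" using subgroup.m_inv_closed[OF QS y] .
    then have "P #> x #> inv (inv y) = P #> x" using bspec[OF fx] by simp
    then have "P #> (x \<otimes> y) = P #> x" using coset_mult_assoc[OF Qc(2) x yc] yc by simp
    then show "z \<in> P" using rcos_eq_iff[OF PS _ x, of "x \<otimes> y"] x yc z by simp
  qed
  have "finite P" using fin Qc finite_subset by blast
  moreover have "card (conj_set G x Q) = card P" using card_conj_set[OF x Qc(1)] cP cQ by simp
  ultimately have e: "conj_set G x Q = P" using sub card_subset_eq by blast
  have "conj_set G (inv x) P = Q"
    using conj_set_comp[of "inv x" x Q] x Qc conj_set_one e by simp
  then show ?thesis using x by (metis inv_closed)
qed

end

context group begin
lemma main_count: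
  fixes T :: "'a set" and p :: nat
  assumes "finite (carrier G)" and "subgroup T G" and "Factorial_Ring.prime p"
  shows "card (conj_orbits G T (Syl_rel G T p))
           \<le> card (rcosets T) div p ^ multiplicity p (card (rcosets T))"
proof -
  have fin: "finite (carrier G)" and TS: "subgroup T G" and p: "Factorial_Ring.prime p" using assms by auto
  have Tc: "T \<subseteq> carrier G" using subgroup.subset[OF TS] .
  define N where "N = card (rcosets T)"
  define c where "c = multiplicity p N"
  define b where "b = multiplicity p (card T)"
  define a where "a = multiplicity p (order G)"
  define CO where "CO = conj_orbits G T (Syl_rel G T p)"
  have lag: "N * card T = order G" using lagrange[OF TS] unfolding N_def .
  have ord0: "order G \<noteq> 0" using fin order_gt_0_iff_finite by simp
  have N0: "N \<noteq> 0" using lag ord0 by (metis mult_is_0)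
  have T0: "card T \<noteq> 0" using lag ord0 by (metis mult_is_0)
  have pe: "prime_elem p" using p by (simp add: prime_imp_prime_elem)
  have abc: "a = c + b" unfolding a_def b_def c_def
    using prime_elem_multiplicity_mult_distrib[OF pe N0 T0] lag by simp
  have p0: "p > 0" using p prime_gt_0_nat by blast
  have "card CO * p ^ c \<le> N"
  proof (cases "Syl_rel G T p = {}")
    case True
    then show ?thesis unfolding CO_def conj_orbits_def by simp
  next
    case False
    then obtain P0 where P0: "P0 \<in> Syl_rel G T p" by blast
    have P0s: "sylow_subgroup G p P0" using P0 unfolding Syl_rel_def by auto
    then have P0S: "subgroup P0 G" and cP0: "card P0 = p ^ a" unfolding sylow_subgroup_def a_def by auto
    have P0c: "P0 \<subseteq> carrier G" using subgroup.subset[OF P0S] .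
    have SylD: "sylow_subgroup G p Z \<and> card (T \<inter> Z) = p ^ b" if "Z \<in> Syl_rel G T p" for Z
      using that unfolding Syl_rel_def sylow_subgroup_def b_def by (auto simp: order_def)
    have Oform: "\<exists>Q\<in>Syl_rel G T p. Ob = {conj_set G t Q | t. t \<in> T}" if "Ob \<in> CO" for Ob
      using that unfolding CO_def conj_orbits_def by auto
    have orb_eq: "Ob = {conj_set G t Z | t. t \<in> T}" if Ob: "Ob \<in> CO" and Z: "Z \<in> Ob" for Ob Z
    proof -
      obtain Q where Q: "Q \<in> Syl_rel G T p" and ObQ: "Ob = {conj_set G t Q | t. t \<in> T}"
        using Oform[OF Ob] by blast
      have Qc: "Q \<subseteq> carrier G" using SylD[OF Q] unfolding sylow_subgroup_def
        using subgroup.subset by blast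
      obtain s where s: "s \<in> T" and Xs: "Z = conj_set G s Q" using Z ObQ by auto
      have sc: "s \<in> carrier G" using s Tc by auto
      show ?thesis
      proof
        show "Ob \<subseteq> {conj_set G t Z | t. t \<in> T}"
        proof
          fix Y assume "Y \<in> Ob"
          then obtain t where t: "t \<in> T" and Yt: "Y = conj_set G t Q" using ObQ by auto
          have tc: "t \<in> carrier G" using t Tc by auto
          have "conj_set G (t \<otimes> inv s) Z = conj_set G (t \<otimes> inv s \<otimes> s) Q"
            using conj_set_comp[of "t \<otimes> inv s" s Q] Xs tc sc Qc by simp
          also have "t \<otimes> inv s \<otimes> s = t" using tc sc by (simp add: m_assoc)
          finally have "Y = conj_set G (t \<otimes> inv s) Z" using Yt by simp
          moreover have "t \<otimes> inv s \<in> T"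
            using t s TS by (simp add: subgroup.m_closed subgroup.m_inv_closed)
          ultimately show "Y \<in> {conj_set G t Z | t. t \<in> T}" by blast
        qed
        show "{conj_set G t Z | t. t \<in> T} \<subseteq> Ob"
        proof
          fix Y assume "Y \<in> {conj_set G t Z | t. t \<in> T}"
          then obtain t where t: "t \<in> T" and Yt: "Y = conj_set G t Z" by auto
          have tc: "t \<in> carrier G" using t Tc by auto
          have "Y = conj_set G (t \<otimes> s) Q" using conj_set_comp[of t s Q] Xs tc sc Qc Yt by simp
          moreover have "t \<otimes> s \<in> T" using t s TS by (simp add: subgroup.m_closed)
          ultimately show "Y \<in> Ob" using ObQ by blast
        qed
      qed
    qed
    have repr: "\<exists>g. g \<in> carrier G \<and> conj_set G g P0 \<in> Ob" if Ob: "Ob \<in> CO" for Ob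
    proof -
      obtain Q where Q: "Q \<in> Syl_rel G T p" and ObQ: "Ob = {conj_set G t Q | t. t \<in> T}"
        using Oform[OF Ob] by blast
      obtain g where g: "g \<in> carrier G" and Qg: "Q = conj_set G g P0"
        using sylow_conj[OF fin p P0s] SylD[OF Q] by blast
      have "Q = conj_set G \<one> Q" using conj_set_one Qg conj_set_subset[OF g P0c] by simp
      then have "Q \<in> Ob" using ObQ subgroup.one_closed[OF TS] by blast
      then show ?thesis using g Qg by blast
    qed
    define gsel where "gsel Ob = (SOME g. g \<in> carrier G \<and> conj_set G g P0 \<in> Ob)" for Ob
    have gsel: "gsel Ob \<in> carrier G \<and> conj_set G (gsel Ob) P0 \<in> Ob" if "Ob \<in> CO" for Ob
      unfolding gsel_def using someI_ex[OF repr[OF that]] .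
    define \<phi> where "\<phi> = (\<lambda>h. \<lambda>C\<in>rcosets T. C #> inv h)"
    interpret A: group_action "G\<lparr>carrier := P0\<rparr>" "rcosets T" \<phi>
      using rcos_action[OF P0S TS] unfolding \<phi>_def .
    define F where "F Ob = orbit (G\<lparr>carrier := P0\<rparr>) \<phi> (T #> gsel Ob)" for Ob
    have Tg: "T #> gsel Ob \<in> rcosets T" if "Ob \<in> CO" for Ob
      using rcosetsI[OF Tc] gsel[OF that] by blast
    have F_in: "F Ob \<in> orbits (G\<lparr>carrier := P0\<rparr>) (rcosets T) \<phi>" if "Ob \<in> CO" for Ob
      unfolding F_def orbits_def using Tg[OF that] by blast
    have F_card: "card (F Ob) = p ^ c" if Ob: "Ob \<in> CO" for Ob
    proof -
      define g where "g = gsel Ob"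
      have g: "g \<in> carrier G" and Z: "conj_set G g P0 \<in> Ob" using gsel[OF Ob] g_def by auto
      obtain Q where Q: "Q \<in> Syl_rel G T p" and ObQ: "Ob = {conj_set G t Q | t. t \<in> T}"
        using Oform[OF Ob] by blast
      have Qc: "Q \<subseteq> carrier G" using SylD[OF Q] unfolding sylow_subgroup_def
        using subgroup.subset by blast
      obtain t where t: "t \<in> T" and Xt: "conj_set G g P0 = conj_set G t Q" using Z ObQ by auto
      have tc: "t \<in> carrier G" using t Tc by auto
      have "T \<inter> conj_set G t Q = conj_set G t T \<inter> conj_set G t Q"
        using conj_set_self[OF TS t] by simp
      also have "\<dots> = conj_set G t (T \<inter> Q)" using conj_set_Int[OF tc Tc Qc] by simp
      finally have "card (T \<inter> conj_set G g P0) = card (T \<inter> Q)"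
        using Xt card_conj_set[OF tc, of "T \<inter> Q"] Tc by auto
      also have "\<dots> = p ^ b" using SylD[OF Q] by simp
      finally have cst: "card (conj_set G g P0 \<inter> T) = p ^ b" by (simp add: Int_commute)
      have "card (F Ob) * card (stabilizer (G\<lparr>carrier := P0\<rparr>) \<phi> (T #> g)) = card P0"
        using A.orbit_stabilizer_theorem[OF Tg[OF Ob]] unfolding F_def g_def by (simp add: order_def)
      moreover have "card (stabilizer (G\<lparr>carrier := P0\<rparr>) \<phi> (T #> g)) = p ^ b"
        using card_rcos_stab[OF P0S TS g] cst unfolding \<phi>_def by simp
      ultimately have "card (F Ob) * p ^ b = p ^ c * p ^ b" using cP0 abc by (simp add: power_add)
      then show ?thesis using p0 by simp
    qed
    have F_inj: "inj_on F CO"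
    proof (rule inj_onI)
      fix Ob1 Ob2 assume Ob1: "Ob1 \<in> CO" and Ob2: "Ob2 \<in> CO" and FF: "F Ob1 = F Ob2"
      define g1 where "g1 = gsel Ob1"
      define g2 where "g2 = gsel Ob2"
      have g1: "g1 \<in> carrier G" and X1: "conj_set G g1 P0 \<in> Ob1" using gsel[OF Ob1] g1_def by auto
      have g2: "g2 \<in> carrier G" and X2: "conj_set G g2 P0 \<in> Ob2" using gsel[OF Ob2] g2_def by auto
      have "T #> g2 \<in> F Ob2" unfolding F_def g2_def using A.orbit_refl[OF Tg[OF Ob2]] .
      then have "T #> g2 \<in> (\<lambda>h. T #> (g1 \<otimes> inv h)) ` P0"
        using FF rcos_orbit[OF P0S TS g1] unfolding F_def g1_def \<phi>_def by simp
      then obtain y where y: "y \<in> P0" and e: "T #> g2 = T #> (g1 \<otimes> inv y)" by auto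
      have yc: "y \<in> carrier G" using y P0c by auto
      define t where "t = g2 \<otimes> inv (g1 \<otimes> inv y)"
      have t: "t \<in> T" using rcos_eq_iff[OF TS g2, of "g1 \<otimes> inv y"] e g1 yc unfolding t_def by simp
      have tc: "t \<in> carrier G" using t Tc by auto
      have g2e: "g2 = t \<otimes> (g1 \<otimes> inv y)" unfolding t_def using g1 g2 yc by (simp add: m_assoc)
      have iy: "inv y \<in> P0" using subgroup.m_inv_closed[OF P0S y] .
      have "conj_set G g2 P0 = conj_set G t (conj_set G g1 (conj_set G (inv y) P0))"
        using g2e conj_set_comp g1 yc tc P0c conj_set_subset by simp
      also have "\<dots> = conj_set G t (conj_set G g1 P0)" using conj_set_self[OF P0S iy] by simp
      finally have X21: "conj_set G g2 P0 = conj_set G t (conj_set G g1 P0)" .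
      have "conj_set G g2 P0 \<in> Ob1" using orb_eq[OF Ob1 X1] X21 t by blast
      then have "Ob1 = {conj_set G s (conj_set G g2 P0) | s. s \<in> T}" using orb_eq[OF Ob1] by blast
      moreover have "Ob2 = {conj_set G s (conj_set G g2 P0) | s. s \<in> T}" using orb_eq[OF Ob2 X2] .
      ultimately show "Ob1 = Ob2" by simp
    qed
    have finOrb: "finite (orbits (G\<lparr>carrier := P0\<rparr>) (rcosets T) \<phi>)"
    proof -
      have "finite (rcosets T)"
        using rcosets_subset_PowG[OF TS] fin by (meson finite_Pow_iff finite_subset)
      moreover have "orbits (G\<lparr>carrier := P0\<rparr>) (rcosets T) \<phi> \<subseteq> Pow (rcosets T)"
        using A.orbits_coverture by blast
      ultimately show ?thesis by (meson finite_Pow_iff finite_subset)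
    qed
    have "card CO * p ^ c = (\<Sum>Ob\<in>CO. card (F Ob))" using F_card by simp
    also have "\<dots> = (\<Sum>Z\<in>F ` CO. card Z)" using sum.reindex[OF F_inj, of card] by simp
    also have "\<dots> \<le> (\<Sum>Z\<in>orbits (G\<lparr>carrier := P0\<rparr>) (rcosets T) \<phi>. card Z)"
      by (rule sum_mono2[OF finOrb]) (use F_in in auto)
    also have "\<dots> = N"
    proof -
      have "(\<Sum>Z\<in>orbits (G\<lparr>carrier := P0\<rparr>) (rcosets T) \<phi>. \<Sum>x\<in>Z. (1::nat)) = (\<Sum>x\<in>rcosets T. 1)"
        by (rule A.disjoint_sum) (use rcosets_subset_PowG[OF TS] fin in \<open>meson finite_Pow_iff finite_subset\<close>)
      then show ?thesis unfolding N_def by simp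
    qed
    finally show ?thesis .
  qed
  then show ?thesis unfolding CO_def N_def c_def using p0 less_eq_div_iff_mult_less_eq by simp
qed

end

theorem lemma3p1:
  fixes R :: "('a, 'b) monoid_scheme" and T :: "'a set" and p :: nat
  assumes "group R" and "finite (carrier R)" and "subgroup T R" and "Factorial_Ring.prime p"
  shows "card (conj_orbits R T (Syl_rel R T p))
           \<le> card (rcosets\<^bsub>R\<^esub> T) div p ^ multiplicity p (card (rcosets\<^bsub>R\<^esub> T))"
  using group.main_count[OF assms(1) assms(2-4)] .

end
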